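(* Let $1\le p<\infty$ and let $\rho\in L^1_{loc}(\mathbb{R}^d)$ be nonnegative, identified with the representative described in the context, and suppose there exist $\theta_0\in(0,1)$, a set $\Lambda\subset\mathbb{S}^{d-1}$ with $\mathcal{H}^{d-1}(\Lambda)>0$ and $\mathbf{v}_0\in\Lambda$ such that $\rho_{\theta_0}(r\mathbf{v})=\rho_{\theta_0}(r\mathbf{v}_0)$ for all $\mathbf{v}\in\Lambda$, $r>0$, and $\lim_{\delta\to0}\delta^p\big/\int_0^\delta\rho_{\theta_0}(r\mathbf{v}_0)r^{d-1}dr=0$. Then there exists a constant $C=C(\theta_0,p)>0$ such that for any $\delta>0$ and $\mathbf{v}\in\mathbb{S}^{d-1}$, $$F_p[\mathbf{u}](t\mathbf{v})\le C\,\frac{\delta^{p}}{\int_0^\delta\rho_{\theta_0}(s\mathbf{v})s^{d-1}\,ds}\int_0^\infty\rho(h\mathbf{v})\,h^{d-1}\,\frac{F_p[\mathbf{u}](h\mathbf{v})}{h^{p}}\,dh$$ for any $0<t<\delta$ and any $\mathbf{u}\in L^{p}(\mathbb{R}^d;\mathbb{R}^d)$.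
   Context: For $\mathbf{u}\in L^p(\mathbb{R}^d;\mathbb{R}^d)$ and $\mathbf{h}\in\mathbb{R}^d\setminus\{0\}$, $F_p[\mathbf{u}](\mathbf{h})=\int_{\mathbb{R}^d}\left|(\mathbf{u}(\mathbf{x}+\mathbf{h})-\mathbf{u}(\mathbf{x}))\cdot\frac{\mathbf{h}}{|\mathbf{h}|}\right|^{p}d\mathbf{x}$. The kernel $\rho$ is identified with the representative $\rho(\mathbf{x})=\lim_{h\to0}\frac{1}{|B_h(\mathbf{x})|}\int_{B_h(\mathbf{x})}\rho$ at Lebesgue points and $\rho(\mathbf{x})=\infty$ otherwise. For $\theta_0\in(0,1)$, $\mathbf{v}\in\mathbb{S}^{d-1}$, $r>0$: $\rho_{\theta_0}(r\mathbf{v})=\inf_{\theta\in[\theta_0,1]}\rho(\theta r\mathbf{v})\theta^{-p}$. *)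

theory Defs
  imports "HOL-Analysis.Analysis"
begin

text \<open>Unnormalised s-dimensional Hausdorff outer measure (s a natural number).
  Normalisation constants are irrelevant for positivity. Empty cover sets contribute 0,
  nonempty ones contribute diam^s (with the convention 0^0 = 1, so s = 0 is counting measure).\<close>
definition hausdorff_pre :: "nat \<Rightarrow> real \<Rightarrow> 'a::metric_space set \<Rightarrow> ennreal" where
  "hausdorff_pre s \<delta> A =
     (INF C \<in> {C :: nat \<Rightarrow> 'a set. A \<subseteq> (\<Union>i. C i) \<and>
                 (\<forall>i. bounded (C i) \<and> diameter (C i) \<le> \<delta>)}.
        (\<Sum>i. (if C i = {} then 0 else ennreal (diameter (C i) ^ s))))"

definition hausdorff_measure :: "nat \<Rightarrow> 'a::metric_space set \<Rightarrow> ennreal" where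
  "hausdorff_measure s A = (SUP \<delta> \<in> {0<..}. hausdorff_pre s \<delta> A)"

definition ball_avg :: "('a::euclidean_space \<Rightarrow> real) \<Rightarrow> 'a \<Rightarrow> real \<Rightarrow> real" where
  "ball_avg f x h = (LINT y : ball x h | lborel. f y) / measure lborel (ball x h)"

definition lebesgue_point :: "('a::euclidean_space \<Rightarrow> real) \<Rightarrow> 'a \<Rightarrow> bool" where
  "lebesgue_point f x \<longleftrightarrow>
     (\<exists>c::real. ((\<lambda>h. ball_avg (\<lambda>y. \<bar>f y - c\<bar>) x h) \<longlongrightarrow> 0) (at_right 0))"

definition rho_rep :: "('a::euclidean_space \<Rightarrow> real) \<Rightarrow> 'a \<Rightarrow> ennreal" where
  "rho_rep f x = (if lebesgue_point f x then ennreal (Lim (at_right 0) (ball_avg f x)) else \<infinity>)"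

definition rho_theta :: "('a::euclidean_space \<Rightarrow> real) \<Rightarrow> real \<Rightarrow> real \<Rightarrow> 'a \<Rightarrow> ennreal" where
  "rho_theta f \<theta>0 p x = (INF \<theta> \<in> {\<theta>0..1}. rho_rep f (\<theta> *\<^sub>R x) * ennreal (\<theta> powr (-p)))"

definition Fp :: "real \<Rightarrow> ('a::euclidean_space \<Rightarrow> 'a) \<Rightarrow> 'a \<Rightarrow> ennreal" where
  "Fp p u h = (\<integral>\<^sup>+ x. ennreal (\<bar>(u (x + h) - u x) \<bullet> (h /\<^sub>R norm h)\<bar> powr p) \<partial>lebesgue)"

definition Lp_vec :: "real \<Rightarrow> ('a::euclidean_space \<Rightarrow> 'a) set" where
  "Lp_vec p = {u. u \<in> borel_measurable lebesgue \<and>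
                  (\<integral>\<^sup>+ x. ennreal (norm (u x) powr p) \<partial>lebesgue) < \<infinity>}"

definition loc_integrable :: "('a::euclidean_space \<Rightarrow> real) \<Rightarrow> bool" where
  "loc_integrable f \<longleftrightarrow> (\<forall>K. compact K \<longrightarrow> set_integrable lebesgue K f)"

definition radial_int :: "('a::euclidean_space \<Rightarrow> real) \<Rightarrow> real \<Rightarrow> real \<Rightarrow> 'a \<Rightarrow> real \<Rightarrow> ennreal" where
  "radial_int f \<theta>0 p v \<delta> =
     (\<integral>\<^sup>+ s \<in> {0<..<\<delta>}. rho_theta f \<theta>0 p (s *\<^sub>R v) * ennreal (s ^ (DIM('a) - 1)) \<partial>lborel)"

end

theory Submission
  imports Defs
begin


lemma nn_integral_cmult_le:
  fixes c :: ennreal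
  assumes "c < top"
  shows "(\<integral>\<^sup>+ x. c * f x \<partial>M) \<le> c * integral\<^sup>N M f"
proof (cases "c = 0")
  case True then show ?thesis by simp
next
  case False
  show ?thesis
    unfolding nn_integral_def
  proof (rule SUP_least)
    fix g assume g: "g \<in> {g. simple_function M g \<and> g \<le> (\<lambda>x. c * f x)}"
    define g' where "g' = (\<lambda>x. g x / c)"
    have sg': "simple_function M g'" unfolding g'_def
      using g by (auto intro: simple_function_compose1[where g="\<lambda>y. y / c"])
    have gg: "g x = c * g' x" for x
      unfolding g'_def using False assms
      by (metis ennreal_times_divide mult.commute mult_divide_eq_ennreal top.not_eq_extremum)
    have "g' \<le> f"
    proof (rule le_funI)
      fix x
      have "g x \<le> c * f x" using g by (auto simp: le_fun_def)
      then have "g x / c \<le> c * f x / c" by (rule divide_right_mono_ennreal)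
      also have "\<dots> = f x" using False assms
        by (metis mult.commute mult_divide_eq_ennreal top.not_eq_extremum)
      finally show "g' x \<le> f x" unfolding g'_def .
    qed
    have "integral\<^sup>S M g = c * integral\<^sup>S M g'"
    proof -
      have "g = (\<lambda>x. c * g' x)" using gg by auto
      then show ?thesis using sg' by simp
    qed
    also have "\<dots> \<le> c * (SUP g \<in> {g. simple_function M g \<and> g \<le> f}. integral\<^sup>S M g)"
      using sg' \<open>g' \<le> f\<close> by (intro mult_left_mono SUP_upper) auto
    finally show "integral\<^sup>S M g \<le> c * (SUP g \<in> {g. simple_function M g \<and> g \<le> f}. integral\<^sup>S M g)" .
  qed
qed

lemma borel_version:
  fixes u :: "'a::euclidean_space \<Rightarrow> 'b::euclidean_space"
  assumes "u \<in> borel_measurable lebesgue"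
  shows "\<exists>u'\<in>borel_measurable lborel. AE x in lborel. u x = u' x"
proof -
  have "\<forall>b\<in>Basis. \<exists>g\<in>borel_measurable lborel. AE x in lborel. u x \<bullet> b = g x"
  proof
    fix b :: 'b assume "b \<in> Basis"
    have "(\<lambda>x. u x \<bullet> b) \<in> borel_measurable lebesgue" using assms by simp
    then show "\<exists>g\<in>borel_measurable lborel. AE x in lborel. u x \<bullet> b = g x"
      by (rule completion_ex_borel_measurable_real)
  qed
  then obtain g where g: "\<And>b. b \<in> Basis \<Longrightarrow> g b \<in> borel_measurable lborel"
     "\<And>b. b \<in> Basis \<Longrightarrow> AE x in lborel. u x \<bullet> b = g b x"
    by metis
  define u' where "u' = (\<lambda>x. \<Sum>b\<in>Basis. g b x *\<^sub>R b)"
  have "u' \<in> borel_measurable lborel" unfolding u'_def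
    using g(1) by (intro borel_measurable_sum borel_measurable_scaleR) auto
  moreover have "AE x in lborel. \<forall>b\<in>Basis. u x \<bullet> b = g b x"
    using g(2) by (intro AE_finite_allI) auto
  then have "AE x in lborel. u x = u' x"
  proof (rule AE_mp, intro AE_I2 impI)
    fix x assume "\<forall>b\<in>Basis. u x \<bullet> b = g b x"
    then show "u x = u' x" unfolding u'_def
      by (metis (no_types, lifting) euclidean_representation sum.cong)
  qed
  ultimately show ?thesis by blast
qed

lemma nn_integral_translate:
  fixes c :: "'a::euclidean_space"
  assumes "f \<in> borel_measurable borel"
  shows "(\<integral>\<^sup>+ x. f (x + c) \<partial>lborel) = (\<integral>\<^sup>+ x. f x \<partial>lborel)"
proof -
  have "(\<integral>\<^sup>+ x. f x \<partial>lborel) = (\<integral>\<^sup>+ x. f x \<partial>distr lborel borel ((+) c))"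
    by (simp add: lborel_distr_plus)
  also have "\<dots> = (\<integral>\<^sup>+ x. f (c + x) \<partial>lborel)"
    using assms by (subst nn_integral_distr) auto
  finally show ?thesis by (simp add: add.commute)
qed

lemma AE_translate:
  fixes c :: "'a::euclidean_space"
  assumes "AE x in lborel. P x"
  shows "AE x in lborel. P (x + c)"
proof -
  from assms obtain N where N0: "{x \<in> space lborel. \<not> P x} \<subseteq> N" "emeasure lborel N = 0" "N \<in> sets lborel"
    by (rule AE_E)
  then have N: "N \<in> null_sets lborel" "{x. \<not> P x} \<subseteq> N" by auto
  have "emeasure lborel ((\<lambda>x. x + c) -` N) = emeasure (distr lborel borel ((+) c)) N"
    using N by (subst emeasure_distr) (auto simp: add.commute[of c] vimage_def)
  also have "\<dots> = 0" using N by (simp add: lborel_distr_plus null_sets_def)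
  finally have e0: "emeasure lborel ((\<lambda>x. x + c) -` N) = 0" .
  have "(\<lambda>x. x + c) -` N \<in> null_sets lborel"
  proof -
    have m: "(\<lambda>x. x + c) \<in> borel \<rightarrow>\<^sub>M borel" by simp
    have "(\<lambda>x. x + c) -` N \<inter> space borel \<in> sets borel"
      using N by (intro measurable_sets[OF m]) auto
    then show ?thesis using e0 by (auto intro!: null_setsI)
  qed
  then show ?thesis
    by (rule AE_I') (use N in auto)
qed

lemma pow2_ineq:
  fixes a b p :: real
  assumes "0 \<le> a" "0 \<le> b" "1 \<le> p"
  shows "(a + b) powr p \<le> 2 powr (p - 1) * (a powr p + b powr p)"
proof -
  have key: "((a + b) / 2) powr p \<le> (a powr p + b powr p) / 2"
  proof (cases "a = 0 \<or> b = 0")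
    case True
    have h: "(x / 2) powr p \<le> x powr p / 2" if "0 \<le> x" for x :: real
    proof -
      have "(x / 2) powr p = x powr p / 2 powr p" using that by (simp add: powr_divide)
      also have "\<dots> \<le> x powr p / 2"
        using assms by (intro divide_left_mono) (auto intro: order_trans[OF _ powr_mono[of 1 p 2]])
      finally show ?thesis .
    qed
    from True show ?thesis using h[of a] h[of b] assms by auto
  next
    case False
    then have "a > 0" "b > 0" using assms by auto
    have "((1/2) *\<^sub>R a + (1 - 1/2) *\<^sub>R b) powr p \<le> (1/2) * a powr p + (1 - 1/2) * b powr p"
      using convex_onD[OF powr_convex[OF assms(3)], of "1/2" a b] \<open>a>0\<close> \<open>b>0\<close> by auto
    then show ?thesis by (simp add: field_simps)
  qed
  have "(a + b) powr p = 2 powr p * ((a + b) / 2) powr p"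
    using assms by (simp add: powr_divide)
  also have "\<dots> \<le> 2 powr p * ((a powr p + b powr p) / 2)"
    by (intro mult_left_mono key) auto
  also have "\<dots> = 2 powr (p - 1) * (a powr p + b powr p)"
    by (simp add: powr_diff)
  finally show ?thesis .
qed

definition Phi :: "real \<Rightarrow> ('a::euclidean_space \<Rightarrow> 'a) \<Rightarrow> 'a \<Rightarrow> real \<Rightarrow> ennreal" where
  "Phi p u v a = (\<integral>\<^sup>+x. ennreal (\<bar>(u (x + a *\<^sub>R v) - u x) \<bullet> v\<bar> powr p) \<partial>lborel)"

lemma Phi_meas:
  assumes [measurable]: "u \<in> borel_measurable lborel"
  shows "Phi p u v \<in> borel_measurable lborel"
proof -
  have [measurable]: "u \<in> borel_measurable borel" using assms by simp
  have "(\<lambda>(a, x). ennreal (\<bar>(u (x + a *\<^sub>R v) - u x) \<bullet> v\<bar> powr p)) \<in> borel_measurable (lborel \<Otimes>\<^sub>M lborel)"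
    by measurable
  then show ?thesis unfolding Phi_def[abs_def]
    by (rule lborel.borel_measurable_nn_integral)
qed

lemma Phi_add:
  assumes [measurable]: "u \<in> borel_measurable lborel" and p: "1 \<le> p"
  shows "Phi p u v (a + b) \<le> ennreal (2 powr (p - 1)) * (Phi p u v a + Phi p u v b)"
proof -
  have [measurable]: "u \<in> borel_measurable borel" using assms by simp
  let ?f = "\<lambda>c x. \<bar>(u (x + c *\<^sub>R v) - u x) \<bullet> v\<bar> powr p"
  have tr: "(\<integral>\<^sup>+x. ennreal (\<bar>(u (x + (a + b) *\<^sub>R v) - u (x + a *\<^sub>R v)) \<bullet> v\<bar> powr p) \<partial>lborel) = Phi p u v b"
  proof -
    have "(\<integral>\<^sup>+x. ennreal (?f b (x + a *\<^sub>R v)) \<partial>lborel) = (\<integral>\<^sup>+x. ennreal (?f b x) \<partial>lborel)"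
      by (rule nn_integral_translate) measurable
    moreover have "\<And>x. x + a *\<^sub>R v + b *\<^sub>R v = x + (a + b) *\<^sub>R v" by (simp add: scaleR_add_left)
    ultimately show ?thesis unfolding Phi_def by simp
  qed
  have "Phi p u v (a + b) \<le> (\<integral>\<^sup>+x. ennreal (2 powr (p - 1)) *
      (ennreal (\<bar>(u (x + (a + b) *\<^sub>R v) - u (x + a *\<^sub>R v)) \<bullet> v\<bar> powr p) + ennreal (?f a x)) \<partial>lborel)"
    unfolding Phi_def
  proof (intro nn_integral_mono)
    fix x
    let ?y = "(u (x + (a + b) *\<^sub>R v) - u (x + a *\<^sub>R v)) \<bullet> v"
    let ?z = "(u (x + a *\<^sub>R v) - u x) \<bullet> v"
    have e: "(u (x + (a + b) *\<^sub>R v) - u x) \<bullet> v = ?y + ?z" by (simp add: inner_diff_left)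
    have "\<bar>?y + ?z\<bar> powr p \<le> (\<bar>?y\<bar> + \<bar>?z\<bar>) powr p"
      using p by (intro powr_mono2) auto
    also have "\<dots> \<le> 2 powr (p - 1) * (\<bar>?y\<bar> powr p + \<bar>?z\<bar> powr p)"
      using p by (intro pow2_ineq) auto
    finally have r: "?f (a + b) x \<le> 2 powr (p - 1) * (\<bar>?y\<bar> powr p + ?f a x)"
      by (simp add: e)
    show "ennreal (?f (a + b) x) \<le> ennreal (2 powr (p - 1)) * (ennreal (\<bar>?y\<bar> powr p) + ennreal (?f a x))"
      using ennreal_leI[OF r] by (simp add: ennreal_mult ennreal_plus)
  qed
  also have "\<dots> = ennreal (2 powr (p - 1)) * (Phi p u v b + Phi p u v a)"
    unfolding tr[symmetric] unfolding Phi_def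
    by (simp add: nn_integral_cmult nn_integral_add)
  finally show ?thesis by (simp add: add.commute)
qed


lemma Phi_neg:
  assumes [measurable]: "u \<in> borel_measurable lborel"
  shows "Phi p u v (- a) = Phi p u v a"
proof -
  have [measurable]: "u \<in> borel_measurable borel" using assms by simp
  let ?g = "\<lambda>x. ennreal (\<bar>(u (x - a *\<^sub>R v) - u x) \<bullet> v\<bar> powr p)"
  have "(\<integral>\<^sup>+x. ?g (x + a *\<^sub>R v) \<partial>lborel) = (\<integral>\<^sup>+x. ?g x \<partial>lborel)"
    by (rule nn_integral_translate) measurable
  moreover have "?g (x + a *\<^sub>R v) = ennreal (\<bar>(u (x + a *\<^sub>R v) - u x) \<bullet> v\<bar> powr p)" for x
  proof -
    have "\<bar>(u x - u (x + a *\<^sub>R v)) \<bullet> v\<bar> = \<bar>(u (x + a *\<^sub>R v) - u x) \<bullet> v\<bar>"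
      by (metis abs_minus_commute inner_diff_left)
    then show ?thesis by simp
  qed
  ultimately show ?thesis unfolding Phi_def by simp
qed

lemma Fp_eq_Phi:
  fixes u :: "'a::euclidean_space \<Rightarrow> 'a"
  assumes u': "u' \<in> borel_measurable lborel" and ae: "AE x in lborel. u x = u' x"
    and v: "norm v = 1" and a: "a > 0"
  shows "Fp p u (a *\<^sub>R v) = Phi p u' v a"
proof -
  have n: "(a *\<^sub>R v) /\<^sub>R norm (a *\<^sub>R v) = v" using v a by simp
  have ae2: "AE x in lborel. u (x + a *\<^sub>R v) = u' (x + a *\<^sub>R v)"
    by (rule AE_translate[OF ae])
  have "Fp p u (a *\<^sub>R v) = (\<integral>\<^sup>+x. ennreal (\<bar>(u (x + a *\<^sub>R v) - u x) \<bullet> v\<bar> powr p) \<partial>lborel)"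
    unfolding Fp_def n nn_integral_completion ..
  also have "\<dots> = Phi p u' v a" unfolding Phi_def
    using ae ae2 by (intro nn_integral_cong_AE) auto
  finally show ?thesis .
qed

lemma Phi_avg:
  assumes u[measurable]: "u \<in> borel_measurable lborel" and p: "1 \<le> p"
    and th: "0 < \<theta>0" "\<theta>0 < 1" and s: "s > 0" and t: "0 < t" "t \<le> (1 - \<theta>0) / 2 * s"
  shows "ennreal ((1 - \<theta>0) / 2 * s) * Phi p u v t
     \<le> ennreal (2 powr p) * (\<integral>\<^sup>+h. Phi p u v h * indicator {\<theta>0 * s..s} h \<partial>lborel)"
proof -
  note Pm[measurable] = Phi_meas[OF u, of p v]
  define A where "A = {\<theta>0 * s .. s - t}"
  let ?J = "{\<theta>0 * s..s}"
  let ?P = "Phi p u v"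
  have le: "\<theta>0 * s \<le> s - t" using t th s by (auto simp: field_simps)
  have pt: "?P t \<le> ennreal (2 powr (p - 1)) * (?P (h + t) + ?P h)" for h
  proof -
    have "?P t = ?P ((h + t) + (- h))" by simp
    also have "\<dots> \<le> ennreal (2 powr (p - 1)) * (?P (h + t) + ?P (- h))"
      by (rule Phi_add[OF u p])
    finally show ?thesis by (simp add: Phi_neg[OF u])
  qed
  have "ennreal ((1 - \<theta>0) / 2 * s) * ?P t \<le> ennreal (s - t - \<theta>0 * s) * ?P t"
    using t th s by (intro mult_right_mono ennreal_leI) (auto simp: field_simps)
  also have "\<dots> = (\<integral>\<^sup>+h. ?P t * indicator A h \<partial>lborel)"
    using le by (simp add: A_def nn_integral_cmult_indicator mult.commute)
  also have "\<dots> \<le> (\<integral>\<^sup>+h. ennreal (2 powr (p - 1)) * (?P (h + t) * indicator A h + ?P h * indicator A h) \<partial>lborel)"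
    by (intro nn_integral_mono) (auto simp: indicator_def pt)
  also have "\<dots> = ennreal (2 powr (p - 1)) * ((\<integral>\<^sup>+h. ?P (h + t) * indicator A h \<partial>lborel) + (\<integral>\<^sup>+h. ?P h * indicator A h \<partial>lborel))"
    by (simp add: A_def nn_integral_cmult nn_integral_add)
  also have "\<dots> \<le> ennreal (2 powr (p - 1)) * ((\<integral>\<^sup>+h. ?P h * indicator ?J h \<partial>lborel) + (\<integral>\<^sup>+h. ?P h * indicator ?J h \<partial>lborel))"
  proof (intro mult_left_mono add_mono)
    have "(\<integral>\<^sup>+h. ?P (h + t) * indicator A h \<partial>lborel) = (\<integral>\<^sup>+h. ?P h * indicator A (h - t) \<partial>lborel)"
      using nn_integral_translate[of "\<lambda>h. ?P h * indicator A (h - t)" t] by (simp add: A_def)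
    also have "\<dots> \<le> (\<integral>\<^sup>+h. ?P h * indicator ?J h \<partial>lborel)"
      using t th s by (intro nn_integral_mono) (auto simp: A_def indicator_def)
    finally show "(\<integral>\<^sup>+h. ?P (h + t) * indicator A h \<partial>lborel) \<le> (\<integral>\<^sup>+h. ?P h * indicator ?J h \<partial>lborel)" .
    show "(\<integral>\<^sup>+h. ?P h * indicator A h \<partial>lborel) \<le> (\<integral>\<^sup>+h. ?P h * indicator ?J h \<partial>lborel)"
      using t by (intro nn_integral_mono) (auto simp: A_def indicator_def)
  qed auto
  also have "\<dots> = ennreal (2 powr p) * (\<integral>\<^sup>+h. ?P h * indicator ?J h \<partial>lborel)"
  proof -
    have "ennreal (2 powr (p - 1)) * 2 = ennreal (2 powr (p - 1) * 2)"
      using ennreal_mult[of "2 powr (p - 1)" 2] by simp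
    also have "2 powr (p - 1) * 2 = 2 powr p" by (simp add: powr_diff)
    finally have "ennreal (2 powr (p - 1)) * 2 = ennreal (2 powr p)" .
    then show ?thesis by (metis mult.assoc mult_2)
  qed
  finally show ?thesis .
qed

lemma Phi_double:
  assumes u[measurable]: "u \<in> borel_measurable lborel" and p: "1 \<le> p"
  shows "Phi p u v (2 ^ k * a) \<le> ennreal ((2 ^ k) powr p) * Phi p u v a"
proof (induction k)
  case 0 then show ?case by simp
next
  case (Suc k)
  let ?P = "Phi p u v"
  have e: "(2::real) ^ Suc k * a = 2 ^ k * a + 2 ^ k * a" by simp
  have "?P (2 ^ Suc k * a) = ?P (2 ^ k * a + 2 ^ k * a)" by (rule arg_cong[OF e])
  also have "\<dots> \<le> ennreal (2 powr (p - 1)) * (?P (2 ^ k * a) + ?P (2 ^ k * a))"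
    by (rule Phi_add[OF u p])
  also have "\<dots> = ennreal (2 powr p) * ?P (2 ^ k * a)"
  proof -
    have "ennreal (2 powr (p - 1)) * 2 = ennreal (2 powr (p - 1) * 2)"
      using ennreal_mult[of "2 powr (p - 1)" 2] by simp
    also have "2 powr (p - 1) * 2 = 2 powr p" by (simp add: powr_diff)
    finally have "ennreal (2 powr (p - 1)) * 2 = ennreal (2 powr p)" .
    then show ?thesis by (metis mult.assoc mult_2)
  qed
  also have "\<dots> \<le> ennreal (2 powr p) * (ennreal ((2 ^ k) powr p) * ?P a)"
    by (intro mult_left_mono Suc.IH) auto
  also have "\<dots> = ennreal ((2 ^ Suc k) powr p) * ?P a"
    by (simp add: mult.assoc[symmetric] ennreal_mult[symmetric] powr_mult[symmetric] del: ennreal_mult)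
  finally show ?case .
qed

lemma exists_pow2:
  fixes x :: real
  assumes "x > 0"
  shows "\<exists>k::nat. x \<le> 2 ^ k \<and> 2 ^ k \<le> max 1 (2 * x)"
proof (cases "x \<le> 1")
  case True then show ?thesis by (intro exI[of _ 0]) auto
next
  case False
  have ex: "\<exists>k::nat. x \<le> 2 ^ k"
    using real_arch_pow[of 2 x] by (auto intro: less_imp_le)
  define k where "k = (LEAST k::nat. x \<le> 2 ^ k)"
  have k1: "x \<le> 2 ^ k" unfolding k_def by (rule LeastI_ex[OF ex])
  have "k \<noteq> 0"
  proof
    assume "k = 0" then show False using k1 False by simp
  qed
  then obtain j where j: "k = Suc j" by (cases k) auto
  have "\<not> x \<le> 2 ^ j" using not_less_Least[of j "\<lambda>k. x \<le> 2 ^ k"] j k_def by auto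
  then have "2 ^ k \<le> 2 * x" using j by auto
  then show ?thesis using k1 by (intro exI[of _ k]) auto
qed



lemma Phi_key:
  assumes u[measurable]: "u \<in> borel_measurable lborel" and p: "1 \<le> p"
    and th: "0 < \<theta>0" "\<theta>0 < 1" and s: "0 < s" "s < \<delta>" and t: "0 < t" "t < \<delta>"
  shows "ennreal ((1 - \<theta>0) / 2 * s powr (p + 1)) * Phi p u v t
     \<le> ennreal ((4 * \<delta> / ((1 - \<theta>0) / 2)) powr p) * (\<integral>\<^sup>+h. Phi p u v h * indicator {\<theta>0 * s..s} h \<partial>lborel)"
proof -
  define \<tau> where "\<tau> = (1 - \<theta>0) / 2"
  have tau: "0 < \<tau>" "\<tau> < 1/2" using th by (auto simp: \<tau>_def)
  let ?P = "Phi p u v"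
  let ?I = "(\<integral>\<^sup>+h. Phi p u v h * indicator {\<theta>0 * s..s} h \<partial>lborel)"
  have "t / (\<tau> * s) > 0" using t s tau by auto
  from exists_pow2[OF this] obtain k :: nat where
    k: "t / (\<tau> * s) \<le> 2 ^ k" "2 ^ k \<le> max 1 (2 * (t / (\<tau> * s)))" by blast
  define t' where "t' = t / 2 ^ k"
  have t'0: "0 < t'" using t by (simp add: t'_def)
  have "t \<le> 2 ^ k * (\<tau> * s)" using k(1) s tau by (simp add: pos_divide_le_eq mult.commute)
  then have "t' \<le> \<tau> * s" unfolding t'_def by (simp add: divide_le_eq mult.commute)
  note t' = t'0 this
  have tt: "t = 2 ^ k * t'" by (simp add: t'_def)
  have b1: "s * 2 ^ k * 2 \<le> 4 * \<delta> / \<tau>"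
  proof -
    have ts: "\<tau> * s \<le> 2 * \<delta>"
    proof -
      have "\<tau> * s \<le> 1 * s" using tau s by (intro mult_right_mono) auto
      then show ?thesis using s by linarith
    qed
    from k(2) have "2 ^ k \<le> (1::real) \<or> 2 ^ k \<le> 2 * (t / (\<tau> * s))" by auto
    then show ?thesis
    proof
      assume "2 ^ k \<le> (1::real)"
      then have "s * 2 ^ k * 2 \<le> s * 1 * 2" using s by (intro mult_right_mono mult_left_mono) auto
      also have "s * 1 * 2 \<le> 4 * \<delta> / \<tau>" using ts tau by (simp add: le_divide_eq mult.commute)
      finally show ?thesis .
    next
      assume "2 ^ k \<le> 2 * (t / (\<tau> * s))"
      then have "s * 2 ^ k * 2 \<le> s * (2 * (t / (\<tau> * s))) * 2" using s by (intro mult_right_mono mult_left_mono) auto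
      also have "\<dots> = 4 * t / \<tau>" using s tau by simp
      also have "\<dots> \<le> 4 * \<delta> / \<tau>" using t tau by (intro divide_right_mono) auto
      finally show ?thesis .
    qed
  qed
  have "ennreal (\<tau> * s powr (p + 1)) * ?P t = ennreal (s powr p) * (ennreal (\<tau> * s) * ?P t)"
  proof -
    have r: "\<tau> * s powr (p + 1) = s powr p * (\<tau> * s)" using s by (simp add: powr_add)
    show ?thesis unfolding r using s tau by (simp add: ennreal_mult mult.assoc)
  qed
  also have "\<dots> \<le> ennreal (s powr p) * (ennreal (\<tau> * s) * (ennreal ((2 ^ k) powr p) * ?P t'))"
    unfolding tt by (intro mult_left_mono Phi_double[OF u p]) auto
  also have "\<dots> = ennreal (s powr p * (2 ^ k) powr p) * (ennreal (\<tau> * s) * ?P t')"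
    by (simp add: ennreal_mult mult_ac)
  also have "\<dots> \<le> ennreal (s powr p * (2 ^ k) powr p) * (ennreal (2 powr p) * ?I)"
    using Phi_avg[OF u p th s(1) t'(1)] t'(2) by (intro mult_left_mono) (auto simp: \<tau>_def)
  also have "\<dots> = ennreal ((s * 2 ^ k * 2) powr p) * ?I"
  proof -
    have "(s * 2 ^ k * 2) powr p = s powr p * (2 ^ k) powr p * 2 powr p"
      using s by (simp add: powr_mult)
    then show ?thesis by (simp add: ennreal_mult mult.assoc)
  qed
  also have "\<dots> \<le> ennreal ((4 * \<delta> / \<tau>) powr p) * ?I"
    using b1 s p by (intro mult_right_mono ennreal_leI powr_mono2) auto
  finally show ?thesis by (simp add: \<tau>_def)
qed



lemma real_ineq_core:
  fixes h s \<theta>0 p :: real and d :: nat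
  assumes "0 < \<theta>0" "0 < h" "h \<le> s" "\<theta>0 * s \<le> h"
  shows "(h / s) powr (- p) * s ^ d * s powr (- (p + 1)) \<le> h powr (- p) * (h / \<theta>0) ^ d / h"
proof -
  have s0: "s > 0" using assms by auto
  have "(h / s) powr (- p) * s ^ d * s powr (- (p + 1)) = h powr (- p) * s ^ d * (s powr p * s powr (- (p + 1)))"
    using assms s0 by (simp add: powr_divide powr_minus divide_simps)
  also have "s powr p * s powr (- (p + 1)) = 1 / s"
    using s0 by (simp add: powr_add[symmetric] powr_minus_divide)
  also have "h powr (- p) * s ^ d * (1 / s) \<le> h powr (- p) * (h / \<theta>0) ^ d * (1 / h)"
  proof (intro mult_mono)
    show "s ^ d \<le> (h / \<theta>0) ^ d" using assms by (intro power_mono) (auto simp: field_simps)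
    show "1 / s \<le> 1 / h" using assms by (intro divide_left_mono) auto
  qed (use assms s0 in auto)
  finally show ?thesis by simp
qed

lemma core:
  fixes \<rho> :: "'a::euclidean_space \<Rightarrow> real" and u :: "'a \<Rightarrow> 'a"
  assumes u'[measurable]: "u' \<in> borel_measurable lborel" and p: "1 \<le> p"
    and th: "0 < \<theta>0" "\<theta>0 < 1" and t: "0 < t" "t < \<delta>"
    and FP: "\<And>h. h > 0 \<Longrightarrow> Fp p u (h *\<^sub>R v) = Phi p u' v h"
    and g[measurable]: "g \<in> borel_measurable lborel"
    and gle: "\<And>s. g s \<le> rho_theta \<rho> \<theta>0 p (s *\<^sub>R v) * ennreal (s ^ (DIM('a) - 1)) * indicator {0<..<\<delta>} s"
  shows "ennreal ((1 - \<theta>0) / 2) * (Phi p u' v t * integral\<^sup>N lborel g) \<le>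
     ennreal ((4 * \<delta> / ((1 - \<theta>0) / 2)) powr p * (1 / \<theta>0 - 1) * (1 / \<theta>0) ^ (DIM('a) - 1)) *
     (\<integral>\<^sup>+ h \<in> {0<..}. rho_rep \<rho> (h *\<^sub>R v) * ennreal (h ^ (DIM('a) - 1)) *
                 Fp p u (h *\<^sub>R v) / ennreal (h powr p) \<partial>lborel)"
proof -
  define \<tau> where "\<tau> = (1 - \<theta>0) / 2"
  have tau0: "0 < \<tau>" using th by (simp add: \<tau>_def)
  define K where "K = (4 * \<delta> / \<tau>) powr p"
  define d where "d = DIM('a) - 1"
  let ?P = "Phi p u' v"
  note Pm[measurable] = Phi_meas[OF u', of p v]
  define G where "G = (\<lambda>s h. ennreal K * g s * ennreal (s powr (- (p + 1))) * (if \<theta>0 * s \<le> h \<and> h \<le> s then ?P h else 0))"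
  have g0: "g s = 0" if "s \<notin> {0<..<\<delta>}" for s
    using gle[of s] that by simp
  have "ennreal \<tau> * (?P t * integral\<^sup>N lborel g) = (\<integral>\<^sup>+s. ennreal \<tau> * ?P t * g s \<partial>lborel)"
    by (simp add: nn_integral_cmult mult.assoc)
  also have "\<dots> \<le> (\<integral>\<^sup>+s. \<integral>\<^sup>+h. G s h \<partial>lborel \<partial>lborel)"
  proof (intro nn_integral_mono)
    fix s
    show "ennreal \<tau> * ?P t * g s \<le> (\<integral>\<^sup>+h. G s h \<partial>lborel)"
    proof (cases "s \<in> {0<..<\<delta>}")
      case False then show ?thesis by (simp add: g0)
    next
      case True
      then have s: "0 < s" "s < \<delta>" by auto
      have key: "ennreal (\<tau> * s powr (p + 1)) * ?P t \<le> ennreal K * (\<integral>\<^sup>+h. ?P h * indicator {\<theta>0 * s..s} h \<partial>lborel)"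
        using Phi_key[OF u' p th s t] by (simp add: \<tau>_def K_def)
      have e1: "ennreal \<tau> * ?P t * g s = g s * ennreal (s powr (- (p + 1))) * (ennreal (\<tau> * s powr (p + 1)) * ?P t)"
      proof -
        have "s powr (- (p + 1)) * s powr (p + 1) = 1"
          using s by (simp add: powr_add[symmetric])
        then have e0: "s powr (- (p + 1)) * (\<tau> * s powr (p + 1)) = \<tau>"
          by (metis mult.left_commute mult.right_neutral)
        have "ennreal (s powr (- (p + 1))) * ennreal (\<tau> * s powr (p + 1)) = ennreal (s powr (- (p + 1)) * (\<tau> * s powr (p + 1)))"
          by (rule ennreal_mult[symmetric]) (use tau0 in auto)
        also have "\<dots> = ennreal \<tau>" by (simp only: e0)
        finally have "ennreal (s powr (- (p + 1))) * ennreal (\<tau> * s powr (p + 1)) = ennreal \<tau>" .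
        then show ?thesis by (metis mult.assoc mult.commute)
      qed
      have e2: "(\<integral>\<^sup>+h. G s h \<partial>lborel) = g s * ennreal (s powr (- (p + 1))) * (ennreal K * (\<integral>\<^sup>+h. ?P h * indicator {\<theta>0 * s..s} h \<partial>lborel))"
      proof -
        have eqG: "(\<lambda>h. G s h) = (\<lambda>h. (g s * ennreal (s powr (- (p + 1))) * ennreal K) * (?P h * indicator {\<theta>0 * s..s} h))"
          unfolding G_def by (auto simp: indicator_def mult_ac)
        have m: "(\<lambda>h. ?P h * indicator {\<theta>0 * s..s} h) \<in> borel_measurable lborel" by measurable
        show ?thesis unfolding eqG nn_integral_cmult[OF m] by (simp only: mult_ac)
      qed
      show ?thesis unfolding e1 e2 by (intro mult_left_mono key) auto
    qed
  qed
  also have "\<dots> = (\<integral>\<^sup>+h. \<integral>\<^sup>+s. G s h \<partial>lborel \<partial>lborel)"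
  proof (rule lborel_pair.Fubini')
    show "(\<lambda>(h, s). G s h) \<in> borel_measurable (lborel \<Otimes>\<^sub>M lborel)"
      unfolding G_def by measurable
  qed
  also have "\<dots> \<le> (\<integral>\<^sup>+h. ennreal (K * (1 / \<theta>0 - 1) * (1 / \<theta>0) ^ d) *
      (rho_rep \<rho> (h *\<^sub>R v) * ennreal (h ^ d) * Fp p u (h *\<^sub>R v) / ennreal (h powr p) * indicator {0<..} h) \<partial>lborel)"
  proof (intro nn_integral_mono)
    fix h :: real
    let ?X = "rho_rep \<rho> (h *\<^sub>R v) * ennreal (h ^ d) * Fp p u (h *\<^sub>R v) / ennreal (h powr p)"
    show "(\<integral>\<^sup>+s. G s h \<partial>lborel) \<le> ennreal (K * (1 / \<theta>0 - 1) * (1 / \<theta>0) ^ d) * (?X * indicator {0<..} h)"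
    proof (cases "h > 0")
      case False
      have "G s h = 0" for s
      proof (cases "s \<in> {0<..<\<delta>}")
        case True
        then have "\<theta>0 * s > 0" using th by auto
        then have "\<not> (\<theta>0 * s \<le> h)" using False by linarith
        then show ?thesis by (simp add: G_def)
      qed (simp add: G_def g0)
      then show ?thesis by simp
    next
      case True
      define M where "M = h powr (- p) * (h / \<theta>0) ^ d / h"
      let ?rr = "rho_rep \<rho> (h *\<^sub>R v)"
      have hle: "h \<le> h / \<theta>0" using True th by (simp add: le_divide_eq)
      have pw: "G s h \<le> (ennreal K * ?P h * ?rr * ennreal M) * indicator {h..h / \<theta>0} s" for s
      proof (cases "s \<in> {0<..<\<delta>} \<and> \<theta>0 * s \<le> h \<and> h \<le> s")
        case False
        then have "G s h = 0" by (auto simp: G_def g0)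
        then show ?thesis by simp
      next
        case c: True
        then have s0: "s > 0" by auto
        have ind: "indicator {h..h / \<theta>0} s = (1::ennreal)" using c th by (auto simp: field_simps)
        have "rho_theta \<rho> \<theta>0 p (s *\<^sub>R v) \<le> rho_rep \<rho> ((h / s) *\<^sub>R (s *\<^sub>R v)) * ennreal ((h / s) powr (- p))"
          unfolding rho_theta_def using c th s0
          by (intro INF_lower) (auto simp: field_simps)
        also have "(h / s) *\<^sub>R (s *\<^sub>R v) = h *\<^sub>R v" using s0 by simp
        finally have rt: "rho_theta \<rho> \<theta>0 p (s *\<^sub>R v) \<le> ?rr * ennreal ((h / s) powr (- p))" .
        have "g s \<le> rho_theta \<rho> \<theta>0 p (s *\<^sub>R v) * ennreal (s ^ d)"
          using gle[of s] c by (simp add: d_def)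
        also have "\<dots> \<le> ?rr * ennreal ((h / s) powr (- p)) * ennreal (s ^ d)"
          by (intro mult_right_mono rt) auto
        finally have "g s \<le> ?rr * ennreal ((h / s) powr (- p)) * ennreal (s ^ d)" .
        then have "ennreal K * g s * ennreal (s powr (- (p + 1))) * ?P h \<le> ennreal K * (?rr * ennreal ((h / s) powr (- p)) * ennreal (s ^ d)) * ennreal (s powr (- (p + 1))) * ?P h"
          by (intro mult_right_mono mult_left_mono) auto
        then have "G s h \<le> ennreal K * (?rr * ennreal ((h / s) powr (- p)) * ennreal (s ^ d)) * ennreal (s powr (- (p + 1))) * ?P h"
          using c unfolding G_def by simp
        also have "\<dots> = ennreal K * ?rr * ennreal ((h / s) powr (- p) * s ^ d * s powr (- (p + 1))) * ?P h"
          using s0 by (simp add: ennreal_mult mult_ac)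
        also have "\<dots> \<le> ennreal K * ?rr * ennreal M * ?P h"
          unfolding M_def using real_ineq_core[of \<theta>0 h s p d] th True c
          by (intro mult_right_mono mult_left_mono ennreal_leI) auto
        finally show ?thesis by (simp add: ind mult_ac)
      qed
      have "(\<integral>\<^sup>+s. G s h \<partial>lborel) \<le> (\<integral>\<^sup>+s. (ennreal K * ?P h * ?rr * ennreal M) * indicator {h..h / \<theta>0} s \<partial>lborel)"
        by (intro nn_integral_mono pw)
      also have "\<dots> = ennreal K * ?P h * ?rr * ennreal M * ennreal (h / \<theta>0 - h)"
        using hle by (simp add: nn_integral_cmult_indicator)
      also have "\<dots> = ennreal (K * (1 / \<theta>0 - 1) * (1 / \<theta>0) ^ d) * (?X * indicator {0<..} h)"
      proof -
        have hp: "h powr p > 0" using True by simp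
        have "?X = ?rr * ?P h * (ennreal (h ^ d) / ennreal (h powr p))"
          using FP[OF True] by (simp add: ennreal_times_divide mult_ac)
        also have "ennreal (h ^ d) / ennreal (h powr p) = ennreal (h ^ d / h powr p)"
          using True hp by (intro divide_ennreal) auto
        finally have X: "?X = ?rr * ?P h * ennreal (h ^ d / h powr p)" .
        have r: "M * (h / \<theta>0 - h) = (1 / \<theta>0 - 1) * (1 / \<theta>0) ^ d * (h ^ d / h powr p)"
          using True th unfolding M_def by (simp add: powr_minus field_simps power_divide)
        have "ennreal K * ?P h * ?rr * ennreal M * ennreal (h / \<theta>0 - h) = ?rr * ?P h * ennreal (K * (M * (h / \<theta>0 - h)))"
        proof -
          have k0: "0 \<le> K" "0 \<le> M" "0 \<le> h / \<theta>0 - h"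
            using True th hle unfolding M_def K_def by auto
          have "ennreal (K * (M * (h / \<theta>0 - h))) = ennreal K * (ennreal M * ennreal (h / \<theta>0 - h))"
            using k0 by (simp add: ennreal_mult)
          then show ?thesis by (simp only: mult_ac)
        qed
        also have "\<dots> = ennreal (K * (1 / \<theta>0 - 1) * (1 / \<theta>0) ^ d) * (?X * indicator {0<..} h)"
        proof -
          have k0: "0 \<le> K" "0 \<le> (1 / \<theta>0 - 1) * (1 / \<theta>0) ^ d" "0 \<le> h ^ d / h powr p"
            using True th unfolding K_def by auto
          have "ennreal (K * ((1 / \<theta>0 - 1) * (1 / \<theta>0) ^ d * (h ^ d / h powr p))) =
              ennreal (K * ((1 / \<theta>0 - 1) * (1 / \<theta>0) ^ d)) * ennreal (h ^ d / h powr p)"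
            using k0 by (simp add: ennreal_mult[symmetric] mult_ac del: ennreal_mult)
          then show ?thesis unfolding r X using True by (simp add: mult_ac)
        qed
        finally show ?thesis .
      qed
      finally show ?thesis .
    qed
  qed
  also have "\<dots> \<le> ennreal (K * (1 / \<theta>0 - 1) * (1 / \<theta>0) ^ d) *
      (\<integral>\<^sup>+h. rho_rep \<rho> (h *\<^sub>R v) * ennreal (h ^ d) * Fp p u (h *\<^sub>R v) / ennreal (h powr p) * indicator {0<..} h \<partial>lborel)"
    by (rule nn_integral_cmult_le) simp
  finally show ?thesis by (simp add: \<tau>_def K_def d_def)
qed

lemma main_ineq:
  fixes \<rho> :: "'a::euclidean_space \<Rightarrow> real" and u :: "'a \<Rightarrow> 'a"
  assumes p: "1 \<le> p" and th: "0 < \<theta>0" "\<theta>0 < 1" and t: "0 < t" "t < \<delta>" and v: "v \<in> sphere 0 1"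
    and u: "u \<in> Lp_vec p" and R: "0 < radial_int \<rho> \<theta>0 p v \<delta>" "radial_int \<rho> \<theta>0 p v \<delta> < \<infinity>"
  shows "Fp p u (t *\<^sub>R v) \<le>
     ennreal ((4 / ((1 - \<theta>0) / 2)) powr p * (1 / \<theta>0 - 1) * (1 / \<theta>0) ^ (DIM('a) - 1) / ((1 - \<theta>0) / 2)) *
     ennreal (\<delta> powr p) / radial_int \<rho> \<theta>0 p v \<delta> *
     (\<integral>\<^sup>+ h \<in> {0<..}. rho_rep \<rho> (h *\<^sub>R v) * ennreal (h ^ (DIM('a) - 1)) *
                 Fp p u (h *\<^sub>R v) / ennreal (h powr p) \<partial>lborel)"
proof -
  define \<tau> where "\<tau> = (1 - \<theta>0) / 2"
  have tau0: "0 < \<tau>" using th by (simp add: \<tau>_def)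
  define C where "C = (4 / \<tau>) powr p * (1 / \<theta>0 - 1) * (1 / \<theta>0) ^ (DIM('a) - 1) / \<tau>"
  define C2 where "C2 = (4 * \<delta> / \<tau>) powr p * (1 / \<theta>0 - 1) * (1 / \<theta>0) ^ (DIM('a) - 1)"
  have C0: "0 \<le> C" using th tau0 by (simp add: C_def)
  have CC2: "ennreal C2 = ennreal \<tau> * ennreal (C * \<delta> powr p)"
  proof -
    have "(4 * \<delta> / \<tau>) powr p = (4 / \<tau>) powr p * \<delta> powr p"
      using t tau0 by (simp add: powr_mult[symmetric])
    then have "C2 = \<tau> * (C * \<delta> powr p)" unfolding C2_def C_def using tau0 th by (simp add: field_simps)
    then show ?thesis using tau0 C0 by (simp add: ennreal_mult)
  qed
  let ?R = "radial_int \<rho> \<theta>0 p v \<delta>"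
  let ?I = "(\<integral>\<^sup>+ h \<in> {0<..}. rho_rep \<rho> (h *\<^sub>R v) * ennreal (h ^ (DIM('a) - 1)) *
                 Fp p u (h *\<^sub>R v) / ennreal (h powr p) \<partial>lborel)"
  have um: "u \<in> borel_measurable lebesgue" using u by (simp add: Lp_vec_def)
  obtain u' where u'[measurable]: "u' \<in> borel_measurable lborel" and ae: "AE x in lborel. u x = u' x"
    using borel_version[OF um] by blast
  have nv: "norm v = 1" using v by simp
  have FP: "\<And>h. h > 0 \<Longrightarrow> Fp p u (h *\<^sub>R v) = Phi p u' v h"
    by (rule Fp_eq_Phi[OF u' ae nv])
  define f where "f = (\<lambda>s. rho_theta \<rho> \<theta>0 p (s *\<^sub>R v) * ennreal (s ^ (DIM('a) - 1)) * indicator {0<..<\<delta>} s)"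
  have Rf: "?R = integral\<^sup>N lborel f" unfolding radial_int_def f_def ..
  have main: "Phi p u' v t * ?R \<le> ennreal (C * \<delta> powr p) * ?I"
  proof -
    have "Phi p u' v t * ?R = (SUP g \<in> {g. simple_function lborel g \<and> g \<le> f}. Phi p u' v t * integral\<^sup>S lborel g)"
      unfolding Rf nn_integral_def by (rule SUP_mult_left_ennreal)
    also have "\<dots> \<le> ennreal (C * \<delta> powr p) * ?I"
    proof (rule SUP_least)
      fix g assume g: "g \<in> {g. simple_function lborel g \<and> g \<le> f}"
      then have sg: "simple_function lborel g" and gf: "g \<le> f" by auto
      have gm: "g \<in> borel_measurable lborel" using sg by (rule borel_measurable_simple_function)
      have gle: "\<And>s. g s \<le> rho_theta \<rho> \<theta>0 p (s *\<^sub>R v) * ennreal (s ^ (DIM('a) - 1)) * indicator {0<..<\<delta>} s"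
        using gf unfolding f_def le_fun_def by blast
      have "ennreal \<tau> * (Phi p u' v t * integral\<^sup>N lborel g) \<le> ennreal C2 * ?I"
        using core[OF u' p th t FP gm gle] unfolding C2_def \<tau>_def .
      also have "\<dots> = ennreal \<tau> * (ennreal (C * \<delta> powr p) * ?I)" by (simp add: CC2 mult.assoc)
      finally have "Phi p u' v t * integral\<^sup>N lborel g \<le> ennreal (C * \<delta> powr p) * ?I"
        using tau0 by (simp add: ennreal_mult_le_mult_iff)
      then show "Phi p u' v t * integral\<^sup>S lborel g \<le> ennreal (C * \<delta> powr p) * ?I"
        using sg by (simp add: nn_integral_eq_simple_integral)
    qed
    finally show ?thesis .
  qed
  have "Fp p u (t *\<^sub>R v) = Phi p u' v t" using FP t by simp
  also have "\<dots> = Phi p u' v t * ?R / ?R" using R by (simp add: ennreal_mult_divide_eq)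
  also have "\<dots> \<le> ennreal (C * \<delta> powr p) * ?I / ?R" by (rule divide_right_mono_ennreal[OF main])
  also have "\<dots> = ennreal C * ennreal (\<delta> powr p) / ?R * ?I"
    using C0 by (simp add: ennreal_mult ennreal_divide_times ennreal_times_divide mult_ac)
  finally show ?thesis unfolding C_def \<tau>_def .
qed

theorem lemma2p1:
  fixes p \<theta>0 :: real
  assumes "1 \<le> p" and "0 < \<theta>0" and "\<theta>0 < 1"
  shows "\<exists>C::real. C > 0 \<and>
    (\<forall>(\<rho> :: 'a::euclidean_space \<Rightarrow> real) \<Lambda> v0.
       loc_integrable \<rho> \<and> (\<forall>x. 0 \<le> \<rho> x) \<and>
       \<Lambda> \<subseteq> sphere 0 1 \<and> hausdorff_measure (DIM('a) - 1) \<Lambda> > 0 \<and> v0 \<in> \<Lambda> \<and>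
       (\<forall>v\<in>\<Lambda>. \<forall>r>0. rho_theta \<rho> \<theta>0 p (r *\<^sub>R v) = rho_theta \<rho> \<theta>0 p (r *\<^sub>R v0)) \<and>
       ((\<lambda>\<delta>. ennreal (\<delta> powr p) / radial_int \<rho> \<theta>0 p v0 \<delta>) \<longlongrightarrow> 0) (at_right 0)
     \<longrightarrow>
       (\<forall>\<delta>>0. \<forall>v\<in>sphere 0 1. \<forall>t. 0 < t \<and> t < \<delta> \<longrightarrow> (\<forall>u\<in>Lp_vec p.
          0 < radial_int \<rho> \<theta>0 p v \<delta> \<and> radial_int \<rho> \<theta>0 p v \<delta> < \<infinity> \<longrightarrow>
          Fp p u (t *\<^sub>R v) \<le>
            ennreal C * ennreal (\<delta> powr p) / radial_int \<rho> \<theta>0 p v \<delta> *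
            (\<integral>\<^sup>+ h \<in> {0<..}. rho_rep \<rho> (h *\<^sub>R v) * ennreal (h ^ (DIM('a) - 1)) *
                 Fp p u (h *\<^sub>R v) / ennreal (h powr p) \<partial>lborel))))"
proof -
  define C where "C = (4 / ((1 - \<theta>0) / 2)) powr p * (1 / \<theta>0 - 1) * (1 / \<theta>0) ^ (DIM('a::euclidean_space) - 1) / ((1 - \<theta>0) / 2)"
  have Cpos: "C > 0" using assms by (simp add: C_def)
  show ?thesis
    apply (rule exI[of _ C])
    apply (intro conjI allI impI ballI)
     apply (rule Cpos)
    unfolding C_def by (rule main_ineq[OF assms]) auto
qed

end
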